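(* Let $G=([k],E)$ be a graph and let $(P_1,\dots,P_k)$ be a $k$-tuple of finite sets in $\mathbb{R}^d$ that is compatible with $G$ and has profile $\boldsymbol\lambda$. If some vertex $i\in[k]$ has degree in $G$ strictly larger than $d-\lambda_i$, then there is no $k$-tuple $(p_1,\dots,p_k)$ with $p_j\in P_j$ for all $j$ whose points are pairwise at distance $1$; that is, $\psi_{k,d}(P_1,\dots,P_k)=0$.
   Context: A sphere of dimension $\ell$ in $\mathbb{R}^d$ ($0\le\ell\le d-1$) is the set of points of an $(\ell+1)$-dimensional affine subspace at a fixed positive distance from a fixed point of that subspace. For finite sets $P_1,\dots,P_k\subset\mathbb{R}^d$, the profile of $(P_1,\dots,P_k)$ is $\boldsymbol\lambda=(\lambda_1,\dots,\lambda_k)$, where $\lambda_i=0$ if $|P_i|\le 3$, and otherwise $\lambda_i$ is the smallest $\ell$ such that some sphere of dimension $\ell$ contains $P_i$, with $\lambda_i=d$ if no sphere contains $P_i$. A graph $G=([k],E)$ is compatible with $(P_1,\dots,P_k)$ if $\|p-p'\|=1$ for every edge $\{i,j\}\in E$ and all $p\in P_i$, $p'\in P_j$. $\psi_{k,d}(P_1,\dots,P_k)$ is the number of $k$-tuples $(p_1,\dots,p_k)$ with $p_i\in P_i$ whose points are pairwise at distance $1$. *)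

theory Defs
  imports "HOL-Analysis.Analysis"
begin

text \<open>Ambient space: R^d is modelled as real^'n with d = CARD('n).\<close>

definition is_sphere :: "nat \<Rightarrow> ('a::euclidean_space) set \<Rightarrow> bool" where
  "is_sphere l S \<longleftrightarrow> (\<exists>A c r. affine A \<and> aff_dim A = int l + 1 \<and> c \<in> A \<and> r > 0 \<and>
       S = {x \<in> A. dist x c = r})"

definition profile_entry :: "('a::euclidean_space) set \<Rightarrow> nat" where
  "profile_entry P =
     (if card P \<le> 3 then 0
      else if \<exists>l S. is_sphere l S \<and> P \<subseteq> S
           then (LEAST l. \<exists>S. is_sphere l S \<and> P \<subseteq> S)
           else DIM('a))"

definition is_graph_on :: "nat \<Rightarrow> nat set set \<Rightarrow> bool" where
  "is_graph_on k E \<longleftrightarrow> (\<forall>e\<in>E. e \<subseteq> {1..k} \<and> card e = 2)"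

definition degree :: "nat set set \<Rightarrow> nat \<Rightarrow> nat" where
  "degree E i = card {j. {i, j} \<in> E \<and> j \<noteq> i}"

definition compatible :: "nat set set \<Rightarrow> (nat \<Rightarrow> ('a::euclidean_space) set) \<Rightarrow> bool" where
  "compatible E P \<longleftrightarrow> (\<forall>i j. {i, j} \<in> E \<longrightarrow> (\<forall>p\<in>P i. \<forall>p'\<in>P j. dist p p' = 1))"

definition psi :: "nat \<Rightarrow> (nat \<Rightarrow> ('a::euclidean_space) set) \<Rightarrow> nat" where
  "psi k P = card {p \<in> PiE {1..k} P. \<forall>i\<in>{1..k}. \<forall>j\<in>{1..k}. i \<noteq> j \<longrightarrow> dist (p i) (p j) = 1}"

end

theory Submission
  imports Defs
begin

lemma gram_indep:
  fixes V :: "'a::euclidean_space set"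
  assumes fin: "finite V" and n1: "\<forall>v\<in>V. v \<bullet> v = 1"
    and h: "\<forall>v\<in>V. \<forall>w\<in>V. v \<noteq> w \<longrightarrow> v \<bullet> w = 1/2"
  shows "independent V"
proof
  assume "dependent V"
  then obtain u where u: "\<exists>v\<in>V. u v \<noteq> 0" and s0: "(\<Sum>v\<in>V. u v *\<^sub>R v) = 0"
    using dependent_finite[OF fin] by auto
  define s where "s = (\<Sum>v\<in>V. u v)"
  have key: "u w = - s" if w: "w \<in> V" for w
  proof -
    have "0 = w \<bullet> (\<Sum>v\<in>V. u v *\<^sub>R v)" using s0 by simp
    also have "\<dots> = (\<Sum>v\<in>V. u v * (w \<bullet> v))" by (simp add: inner_sum_right)
    also have "\<dots> = (\<Sum>v\<in>V. u v / 2 + (if v = w then u v / 2 else 0))"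
    proof (rule sum.cong[OF refl])
      fix v assume "v \<in> V"
      then show "u v * (w \<bullet> v) = u v / 2 + (if v = w then u v / 2 else 0)"
        using n1 h w by (cases "v = w") (auto simp: inner_commute)
    qed
    also have "\<dots> = s / 2 + u w / 2"
      using w fin by (simp add: sum.distrib s_def sum_divide_distrib)
    finally show ?thesis by simp
  qed
  have "(\<Sum>v\<in>V. u v) = (\<Sum>v\<in>V. - s)" by (rule sum.cong) (simp_all add: key)
  then have "s = (\<Sum>v\<in>V. - s)" by (simp only: s_def)
  hence "s = - real (card V) * s" by simp
  hence "s * (1 + real (card V)) = 0" by (simp add: algebra_simps)
  hence "s = 0" by (metis add_nonneg_eq_0_iff mult_eq_0_iff of_nat_0_le_iff zero_le_one one_neq_zero)
  then show False using u key by auto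
qed

lemma unit_simplex:
  fixes Q :: "'a::euclidean_space set"
  assumes fin: "finite Q" and d1: "\<forall>q\<in>Q. dist q b = 1"
    and d2: "\<forall>q\<in>Q. \<forall>q'\<in>Q. q \<noteq> q' \<longrightarrow> dist q q' = 1"
  shows "independent ((\<lambda>q. q - b) ` Q) \<and> card ((\<lambda>q. q - b) ` Q) = card Q"
proof
  have inj: "inj_on (\<lambda>q. q - b) Q" by (auto simp: inj_on_def)
  then show "card ((\<lambda>q. q - b) ` Q) = card Q" by (rule card_image)
  show "independent ((\<lambda>q. q - b) ` Q)"
  proof (rule gram_indep)
    show "finite ((\<lambda>q. q - b) ` Q)" using fin by simp
    show "\<forall>v\<in>(\<lambda>q. q - b) ` Q. v \<bullet> v = 1"
    proof
      fix v assume "v \<in> (\<lambda>q. q - b) ` Q"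
      then obtain q where q: "q \<in> Q" "v = q - b" by auto
      have "norm (q - b) = 1" using d1 q by (simp add: dist_norm)
      then show "v \<bullet> v = 1" using q by (simp add: power2_norm_eq_inner[symmetric])
    qed
    show "\<forall>v\<in>(\<lambda>q. q - b) ` Q. \<forall>w\<in>(\<lambda>q. q - b) ` Q. v \<noteq> w \<longrightarrow> v \<bullet> w = 1/2"
    proof (intro ballI impI)
      fix v w assume "v \<in> (\<lambda>q. q - b) ` Q" "w \<in> (\<lambda>q. q - b) ` Q" "v \<noteq> w"
      then obtain q q' where q: "q \<in> Q" "v = q - b" "q' \<in> Q" "w = q' - b" "q \<noteq> q'" by auto
      have a: "norm (q - b) ^ 2 = 1" "norm (q' - b) ^ 2 = 1" "norm (q - q') ^ 2 = 1"
        using d1 d2 q by (auto simp: dist_norm)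
      have "q - q' = (q - b) - (q' - b)" by simp
      then have "norm (q - q') ^ 2 = norm (q-b) ^ 2 + norm (q'-b)^2 - 2 * ((q - b) \<bullet> (q' - b))"
        by (simp only: power2_norm_eq_inner inner_diff_left inner_diff_right inner_commute) 
          (simp add: inner_diff inner_commute algebra_simps)
      then show "v \<bullet> w = 1/2" using a q by simp
    qed
  qed
qed

lemma orth4:
  fixes x y q b :: "'a::real_inner"
  assumes "dist x q = 1" "dist x b = 1" "dist y q = 1" "dist y b = 1"
  shows "(q - b) \<bullet> (x - y) = 0"
proof -
  have e: "\<And>u v :: 'a. dist u v = 1 \<Longrightarrow> u \<bullet> u - 2 * (u \<bullet> v) + v \<bullet> v = 1"
  proof -
    fix u v :: 'a assume "dist u v = 1"
    hence "norm (u - v) ^ 2 = 1" by (simp add: dist_norm)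
    thus "u \<bullet> u - 2 * (u \<bullet> v) + v \<bullet> v = 1"
      by (simp add: power2_norm_eq_inner inner_diff inner_commute algebra_simps)
  qed
  have "x \<bullet> x - 2 * (x \<bullet> q) + q \<bullet> q = 1" "x \<bullet> x - 2 * (x \<bullet> b) + b \<bullet> b = 1"
       "y \<bullet> y - 2 * (y \<bullet> q) + q \<bullet> q = 1" "y \<bullet> y - 2 * (y \<bullet> b) + b \<bullet> b = 1"
    using assms e by auto
  then show ?thesis by (simp add: inner_diff inner_commute algebra_simps)
qed

lemma sphere_dim:
  assumes "is_sphere l (S :: 'a::euclidean_space set)"
  shows "l < DIM('a)"
proof -
  obtain A :: "'a set" where "affine A" "aff_dim A = int l + 1"
    using assms unfolding is_sphere_def by auto
  moreover have "aff_dim A \<le> int DIM('a)" by (rule aff_dim_le_DIM)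
  ultimately show ?thesis by linarith
qed

lemma profile_le: "profile_entry (P :: 'a::euclidean_space set) \<le> DIM('a)"
proof -
  have "(LEAST l. \<exists>S. is_sphere l S \<and> P \<subseteq> S) \<le> DIM('a)"
    if "\<exists>l S. is_sphere l S \<and> P \<subseteq> S"
  proof -
    from that obtain l S where "is_sphere l S" "P \<subseteq> S" by blast
    then have "(LEAST l. \<exists>S. is_sphere l S \<and> P \<subseteq> S) \<le> l" by (blast intro: Least_le)
    moreover have "l < DIM('a)" using sphere_dim \<open>is_sphere l S\<close> by blast
    ultimately show ?thesis by simp
  qed
  note H = this
  show ?thesis
  proof (cases "card P \<le> 3")
    case True
    then show ?thesis by (simp add: profile_entry_def)
  next
    case c3: False
    show ?thesis
    proof (cases "\<exists>l S. is_sphere l S \<and> P \<subseteq> S")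
      case True
      then have "profile_entry P = (LEAST l. \<exists>S. is_sphere l S \<and> P \<subseteq> S)"
        using c3 unfolding profile_entry_def by (simp only: if_False if_True)
      then show ?thesis using H[OF True] by simp
    next
      case False
      then have "profile_entry P = DIM('a)"
        using c3 unfolding profile_entry_def by (simp only: if_False if_True)
      then show ?thesis by simp
    qed
  qed
qed

theorem lemma11p5:
  fixes k :: nat and E :: "nat set set" and P :: "nat \<Rightarrow> (real^'n) set" and i :: nat
  assumes "is_graph_on k E"
    and "\<forall>j\<in>{1..k}. finite (P j)"
    and "compatible E P"
    and "i \<in> {1..k}"
    and "int (degree E i) > int CARD('n) - int (profile_entry (P i))"
  shows "psi k P = 0"
proof -
  let ?T = "{p \<in> PiE {1..k} P. \<forall>i\<in>{1..k}. \<forall>j\<in>{1..k}. i \<noteq> j \<longrightarrow> dist (p i) (p j) = 1}"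
  have "?T = {}"
  proof (rule ccontr)
    assume "?T \<noteq> {}"
    then obtain p where pT: "p \<in> ?T" by blast
    have pP: "p \<in> PiE {1..k} P" using pT by simp
    have pd: "\<forall>a\<in>{1..k}. \<forall>b\<in>{1..k}. a \<noteq> b \<longrightarrow> dist (p a) (p b) = 1" using pT by simp
    define N where "N = {j. {i, j} \<in> E \<and> j \<noteq> i}"
    have Nsub: "N \<subseteq> {1..k}"
    proof
      fix j assume "j \<in> N"
      then have "{i, j} \<in> E" by (simp add: N_def)
      moreover have "\<forall>e\<in>E. e \<subseteq> {1..k} \<and> card e = 2" using assms(1) unfolding is_graph_on_def .
      ultimately have "{i, j} \<subseteq> {1..k}" by blast
      then show "j \<in> {1..k}" by simp
    qed
    have finN: "finite N" using Nsub finite_subset by blast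
    have D: "degree E i = card N" by (simp add: degree_def N_def)
    have iN: "i \<notin> N" by (simp add: N_def)
    have pi: "p i \<in> P i" using pP assms(4) by (auto simp: PiE_def Pi_def)
    have pj: "p j \<in> P j" if "j \<in> N" for j using Nsub that pP by (auto simp: PiE_def Pi_def)
    have comp: "\<forall>x\<in>P i. dist x (p j) = 1" if "j \<in> N" for j
      using assms(3) that pj[OF that] unfolding compatible_def N_def by blast
    have inj: "inj_on p N"
    proof (rule inj_onI)
      fix a b assume "a \<in> N" "b \<in> N" "p a = p b"
      then have "a \<in> {1..k}" "b \<in> {1..k}" using Nsub by auto
      show "a = b"
      proof (rule ccontr)
        assume "a \<noteq> b"
        then have "dist (p a) (p b) = 1" using pd \<open>a \<in> {1..k}\<close> \<open>b \<in> {1..k}\<close> by blast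
        then show False using \<open>p a = p b\<close> by simp
      qed
    qed
    define Q where "Q = p ` N"
    have finQ: "finite Q" using finN by (simp add: Q_def)
    have cardQ: "card Q = card N" using card_image[OF inj] by (simp add: Q_def)
    have Qd1: "\<forall>q\<in>Q. dist q (p i) = 1"
    proof
      fix q assume "q \<in> Q"
      then obtain j where j: "j \<in> N" "q = p j" unfolding Q_def by blast
      then have "j \<in> {1..k}" "j \<noteq> i" using Nsub iN by auto
      then show "dist q (p i) = 1" using pd assms(4) j by blast
    qed
    have Qd2: "\<forall>q\<in>Q. \<forall>q'\<in>Q. q \<noteq> q' \<longrightarrow> dist q q' = 1"
    proof (intro ballI impI)
      fix q q' assume "q \<in> Q" "q' \<in> Q" "q \<noteq> q'"
      then obtain j j' where j: "j \<in> N" "q = p j" "j' \<in> N" "q' = p j'" unfolding Q_def by blast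
      then have "j \<in> {1..k}" "j' \<in> {1..k}" "j \<noteq> j'" using Nsub \<open>q \<noteq> q'\<close> by auto
      then show "dist q q' = 1" using pd j by blast
    qed
    have "independent ((\<lambda>q. q - p i) ` Q) \<and> card ((\<lambda>q. q - p i) ` Q) = card Q"
      by (rule unit_simplex[OF finQ Qd1 Qd2])
    then have ind0: "independent ((\<lambda>q. q - p i) ` Q)" and cd0: "card ((\<lambda>q. q - p i) ` Q) = card Q"
      by simp_all
    have "card ((\<lambda>q. q - p i) ` Q) \<le> DIM(real^'n)" using independent_bound[OF ind0] by simp
    then have Dle: "card N \<le> CARD('n)" using cd0 cardQ by simp
    show False
    proof (cases "card (P i) \<le> 3")
      case True
      then have "profile_entry (P i) = 0" by (simp add: profile_entry_def)
      then show False using assms(5) D Dle by simp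
    next
      case False
      have finP: "finite (P i)" using assms(2,4) by blast
      have "N \<noteq> {}"
      proof
        assume "N = {}"
        then have "degree E i = 0" using D by simp
        moreover have "profile_entry (P i) \<le> CARD('n)"
          using profile_le[of "P i"] by simp
        ultimately show False using assms(5) by linarith
      qed
      then obtain j0 where j0: "j0 \<in> N" by blast
      define b where "b = p j0"
      have bQ: "b \<in> Q" using j0 by (simp add: b_def Q_def)
      define V where "V = (\<lambda>q. q - b) ` (Q - {b})"
      have "independent V \<and> card V = card (Q - {b})"
        unfolding V_def
      proof (rule unit_simplex)
        show "finite (Q - {b})" using finQ by simp
        show "\<forall>q\<in>Q - {b}. dist q b = 1" using Qd2 bQ by blast
        show "\<forall>q\<in>Q - {b}. \<forall>q'\<in>Q - {b}. q \<noteq> q' \<longrightarrow> dist q q' = 1" using Qd2 by blast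
      qed
      then have indV: "independent V" and cardV: "card V = card N - 1"
        using cardQ bQ finQ by (simp_all add: card_Diff_singleton)
      define A where "A = affine hull (P i)"
      have affA: "affine A" by (simp add: A_def)
      have clA: "closed A" by (simp add: A_def)
      have cvA: "convex A" by (rule affine_imp_convex[OF affA])
      have PA: "P i \<subseteq> A" by (simp add: A_def hull_subset)
      have Ane: "A \<noteq> {}" using PA pi by blast
      define c where "c = closest_point A b"
      have cA: "c \<in> A" unfolding c_def by (rule closest_point_in_set[OF clA Ane])
      have orth: "inner (b - c) (x - c) = 0" if "x \<in> A" for x
      proof -
        have y: "2 *\<^sub>R c + (-1) *\<^sub>R x \<in> A" by (rule mem_affine[OF affA cA that]) simp
        have h1: "inner (b - c) (x - c) \<le> 0"
          using closest_point_dot[OF cvA clA that] by (simp add: c_def)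
        have h2: "inner (b - c) ((2 *\<^sub>R c + (-1) *\<^sub>R x) - c) \<le> 0"
          using closest_point_dot[OF cvA clA y] by (simp add: c_def)
        have eq: "(2 *\<^sub>R c + (-1) *\<^sub>R x) - c = - (x - c)"
          by (simp add: algebra_simps scaleR_2)
        have "inner (b - c) (- (x - c)) \<le> 0" using h2 unfolding eq .
        then have "- inner (b - c) (x - c) \<le> 0" by (simp only: inner_minus_right)
        then show ?thesis using h1 by linarith
      qed
      have pyth: "dist x b ^ 2 = dist x c ^ 2 + dist c b ^ 2" if "x \<in> A" for x
      proof -
        have e: "(x - c) + (c - b) = x - b" by simp
        have "norm ((x - c) + (c - b)) ^ 2 = norm (x - c) ^ 2 + norm (c - b) ^ 2 + 2 * inner (x - c) (c - b)"
          unfolding power2_norm_eq_inner inner_add_left inner_add_right by (simp add: inner_commute)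
        then have "norm (x - b) ^ 2 = norm (x - c) ^ 2 + norm (c - b) ^ 2 + 2 * inner (x - c) (c - b)"
          unfolding e .
        moreover have "inner (x - c) (c - b) = - inner (b - c) (x - c)"
          by (simp add: inner_commute inner_diff algebra_simps)
        ultimately show ?thesis using orth[OF that] by (simp add: dist_norm)
      qed
      define r where "r = dist (p i) c"
      have eqd: "dist x c = r" if "x \<in> P i" for x
      proof -
        have e1: "dist x b = 1" "dist (p i) b = 1" using comp[OF j0] that pi by (auto simp: b_def)
        have h1: "dist x c ^ 2 + dist c b ^ 2 = 1"
          using pyth[OF subsetD[OF PA that]] e1 by simp
        have h2: "dist (p i) c ^ 2 + dist c b ^ 2 = 1"
          using pyth[OF subsetD[OF PA pi]] e1 by simp
        from h1 h2 have "dist x c ^ 2 = dist (p i) c ^ 2" by linarith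
        then show ?thesis unfolding r_def by (simp add: power2_eq_iff_nonneg)
      qed
      have rpos: "r > 0"
      proof (rule ccontr)
        assume "\<not> r > 0"
        then have "r = 0" using zero_le_dist[of "p i" c] r_def by linarith
        then have "P i \<subseteq> {c}" using eqd by auto
        then have "card (P i) \<le> 1" using card_mono[of "{c}" "P i"] by simp
        then show False using False by simp
      qed
      have adA: "aff_dim A = aff_dim (P i)" by (simp add: A_def)
      have ad1: "aff_dim (P i) \<ge> 1"
      proof -
        have "aff_dim (P i) \<noteq> -1" using pi aff_dim_empty[of "P i"] by auto
        moreover have "aff_dim (P i) \<noteq> 0"
        proof
          assume "aff_dim (P i) = 0"
          then obtain a where "P i = {a}" using aff_dim_eq_0 by blast
          then show False using False by simp
        qed
        ultimately show ?thesis using aff_dim_geq[of "P i"] by linarith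
      qed
      define l0 where "l0 = nat (aff_dim A - 1)"
      have l0eq: "aff_dim A = int l0 + 1" using ad1 adA l0_def by simp
      have sph: "is_sphere l0 {x \<in> A. dist x c = r}"
        unfolding is_sphere_def using affA l0eq cA rpos by blast
      have sub: "P i \<subseteq> {x \<in> A. dist x c = r}" using PA eqd by auto
      have ex: "\<exists>l S. is_sphere l S \<and> P i \<subseteq> S" using sph sub by blast
      have lam: "profile_entry (P i) \<le> l0"
      proof -
        have "profile_entry (P i) = (LEAST l. \<exists>S. is_sphere l S \<and> P i \<subseteq> S)"
          using False ex by (simp add: profile_entry_def)
        also have "\<dots> \<le> l0" using sph sub by (blast intro: Least_le)
        finally show ?thesis .
      qed
      define U where "U = (+) (- p i) ` P i"
      have adU: "aff_dim (P i) = int (dim U)"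
      proof -
        have "p i \<in> affine hull P i" using pi by (rule hull_inc)
        then show ?thesis unfolding U_def by (rule aff_dim_eq_dim)
      qed
      define Orth where "Orth = {y. \<forall>x\<in>span V. orthogonal x y}"
      have UO: "U \<subseteq> Orth"
      proof
        fix y assume "y \<in> U"
        then obtain x where x: "x \<in> P i" "y = x - p i" unfolding U_def by auto
        have "orthogonal y z" if "z \<in> span V" for z
        proof (rule orthogonal_to_span[OF that])
          fix v assume "v \<in> V"
          then obtain q where q: "q \<in> Q" "q \<noteq> b" "v = q - b" unfolding V_def by auto
          then obtain j where j: "j \<in> N" "q = p j" unfolding Q_def by auto
          have "(q - b) \<bullet> (x - p i) = 0"
          proof (rule orth4)
            show "dist x q = 1" using comp[OF j(1)] x j by simp
            show "dist x b = 1" using comp[OF j0] x by (simp add: b_def)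
            show "dist (p i) q = 1" using comp[OF j(1)] pi j by simp
            show "dist (p i) b = 1" using comp[OF j0] pi by (simp add: b_def)
          qed
          then show "orthogonal y v" using q x by (simp add: orthogonal_def inner_commute)
        qed
        then show "y \<in> Orth" unfolding Orth_def by (simp add: orthogonal_commute)
      qed
      have "dim {y \<in> UNIV. \<forall>x \<in> span V. orthogonal x y} + dim (span V) = dim (UNIV :: (real^'n) set)"
        by (rule dim_subspace_orthogonal_to_vectors) auto
      then have dO: "dim Orth + card V = CARD('n)"
        using dim_eq_card_independent[OF indV] by (simp add: Orth_def dim_span)
      have "dim U \<le> dim Orth" using UO by (rule dim_subset)
      moreover have "card N \<ge> 1" using \<open>N \<noteq> {}\<close> finN by (simp add: Suc_le_eq card_gt_0_iff)
      ultimately have "int l0 + card N \<le> CARD('n)"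
        using dO cardV l0eq adA adU by linarith
      then show False using assms(5) D lam by linarith
    qed
  qed
  then show ?thesis unfolding psi_def by (metis card.empty)
qed

end
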